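(* Let $\mathcal U=\{\mathbf u\in\mathbb R^n:\mathbf u^L\le\mathbf u\le\mathbf u^U\}$ with $0\le u^L_i<u^U_i<\infty$ for all $i$, and let $\widehat{\mathbf u}^j\in\mathcal U$. Given $p\ge1$, $\rho\ge0$ and $\mathbf s\in\mathcal S$, let $\omega_j(\rho,\mathbf s)=\sup_{\mathbf u\in\mathcal U}\{f(\mathbf s,\mathbf u)-\rho\|\mathbf u-\widehat{\mathbf u}^j\|_p^p\}$. Then $$\omega_j(\rho,\mathbf s)=\max_{\mathbf t}\ \sum_{k=1}^n\sum_{\ell=k}^{n+1}\Big(\sum_{i=k}^{\min\{\ell,n\}}z_{i\ell j}\Big)t_{k\ell}\quad\text{s.t.}\quad\sum_{k=1}^i\sum_{\ell=i}^{n+1}t_{k\ell}=1\ \ \forall i\in[n],\quad t_{k\ell}\ge0\ \ \forall k\in[n],\ \ell\in[k,n+1]_{\mathbb Z},$$ where, for $i\in[n]$ and $\ell\in[i,n+1]_{\mathbb Z}$, $z_{i\ell j}=-s_i\pi_{i\ell}+\sup_{u^L_i\le u_i\le u^U_i}\{\pi_{i\ell}u_i-\rho|u_i-\widehat u^j_i|^p\}$, with $\pi_{i\ell}=-d_\ell+\sum_{q=i+1}^\ell c_q$ if $\ell\in[i,n]_{\mathbb Z}$ and $\pi_{i,n+1}=C+\sum_{q=i+1}^nc_q$.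
   Context: Notation: $[m]=\{1,\dots,m\}$, $[i,j]_{\mathbb Z}=\{i,\dots,j\}$. $n\ge1$, $T>0$, $\mathcal S=\{\mathbf s\in\mathbb R^n:\mathbf s\ge0,\sum_is_i\le T\}$; costs $\mathbf c,\mathbf d\in\mathbb R^n_+$, $C\ge0$ with $d_{i+1}-d_i\le c_{i+1}$ ($i\in[n-1]$). $f(\mathbf s,\mathbf u)$ is the optimal value of $\min_{\mathbf w\in\mathbb R^{n+1},\mathbf v\in\mathbb R^n}\sum_{i=1}^n(c_iw_i+d_iv_i)+Cw_{n+1}$ s.t. $w_i-v_{i-1}=u_{i-1}+w_{i-1}-s_{i-1}$ ($i\in[2,n+1]_{\mathbb Z}$), $\mathbf w\ge0,w_1=0,\mathbf v\ge0$. *)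

theory Defs
  imports "HOL-Analysis.Analysis"
begin

text \<open>Vectors in R^n are functions nat => real, used on indices 1..n only.\<close>

text \<open>Feasibility of (w,v) in the LP defining f(s,u); w is indexed 1..n+1, v by 1..n.\<close>
definition lp_feasible :: "nat \<Rightarrow> (nat \<Rightarrow> real) \<Rightarrow> (nat \<Rightarrow> real)
    \<Rightarrow> (nat \<Rightarrow> real) \<Rightarrow> (nat \<Rightarrow> real) \<Rightarrow> bool" where
  "lp_feasible n s u w v \<longleftrightarrow>
     (\<forall>i\<in>{2..n+1}. w i - v (i-1) = u (i-1) + w (i-1) - s (i-1)) \<and>
     (\<forall>i\<in>{1..n+1}. w i \<ge> 0) \<and> w 1 = 0 \<and> (\<forall>i\<in>{1..n}. v i \<ge> 0)"

definition lp_obj :: "nat \<Rightarrow> (nat \<Rightarrow> real) \<Rightarrow> (nat \<Rightarrow> real) \<Rightarrow> real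
    \<Rightarrow> (nat \<Rightarrow> real) \<Rightarrow> (nat \<Rightarrow> real) \<Rightarrow> real" where
  "lp_obj n c d C w v = (\<Sum>i=1..n. c i * w i + d i * v i) + C * w (n+1)"

definition f_val :: "nat \<Rightarrow> (nat \<Rightarrow> real) \<Rightarrow> (nat \<Rightarrow> real) \<Rightarrow> real
    \<Rightarrow> (nat \<Rightarrow> real) \<Rightarrow> (nat \<Rightarrow> real) \<Rightarrow> real" where
  "f_val n c d C s u = Inf {lp_obj n c d C w v | w v. lp_feasible n s u w v}"

definition omega :: "nat \<Rightarrow> (nat \<Rightarrow> real) \<Rightarrow> (nat \<Rightarrow> real) \<Rightarrow> real
    \<Rightarrow> (nat \<Rightarrow> real) \<Rightarrow> (nat \<Rightarrow> real) \<Rightarrow> (nat \<Rightarrow> real) \<Rightarrow> real \<Rightarrow> real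
    \<Rightarrow> (nat \<Rightarrow> real) \<Rightarrow> real" where
  "omega n c d C uL uU uhat p \<rho> s =
     Sup {f_val n c d C s u - \<rho> * (\<Sum>i=1..n. \<bar>u i - uhat i\<bar> powr p) | u.
            \<forall>i\<in>{1..n}. uL i \<le> u i \<and> u i \<le> uU i}"

definition pi_coef :: "nat \<Rightarrow> (nat \<Rightarrow> real) \<Rightarrow> (nat \<Rightarrow> real) \<Rightarrow> real
    \<Rightarrow> nat \<Rightarrow> nat \<Rightarrow> real" where
  "pi_coef n c d C i l =
     (if l \<le> n then - d l + (\<Sum>q=i+1..l. c q) else C + (\<Sum>q=i+1..n. c q))"

definition z_coef :: "nat \<Rightarrow> (nat \<Rightarrow> real) \<Rightarrow> (nat \<Rightarrow> real) \<Rightarrow> real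
    \<Rightarrow> (nat \<Rightarrow> real) \<Rightarrow> (nat \<Rightarrow> real) \<Rightarrow> (nat \<Rightarrow> real) \<Rightarrow> real \<Rightarrow> real
    \<Rightarrow> (nat \<Rightarrow> real) \<Rightarrow> nat \<Rightarrow> nat \<Rightarrow> real" where
  "z_coef n c d C uL uU uhat p \<rho> s i l =
     - s i * pi_coef n c d C i l +
     Sup {pi_coef n c d C i l * x - \<rho> * \<bar>x - uhat i\<bar> powr p | x. uL i \<le> x \<and> x \<le> uU i}"

definition t_feasible :: "nat \<Rightarrow> (nat \<Rightarrow> nat \<Rightarrow> real) \<Rightarrow> bool" where
  "t_feasible n t \<longleftrightarrow>
     (\<forall>i\<in>{1..n}. (\<Sum>k=1..i. \<Sum>l=i..n+1. t k l) = 1) \<and>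
     (\<forall>k\<in>{1..n}. \<forall>l\<in>{k..n+1}. t k l \<ge> 0)"

definition t_obj :: "nat \<Rightarrow> (nat \<Rightarrow> nat \<Rightarrow> real) \<Rightarrow> (nat \<Rightarrow> nat \<Rightarrow> real) \<Rightarrow> real" where
  "t_obj n z t = (\<Sum>k=1..n. \<Sum>l=k..n+1. (\<Sum>i=k..min l n. z i l) * t k l)"

end

theory Submission
  imports Defs
begin

lemma ident:
  fixes P w v :: "nat \<Rightarrow> real"
  shows "(\<Sum>i=1..Suc m. P i * (w (i+1) - w i - v i)) =
    P (Suc m) * w (Suc m + 1) - P 1 * w 1 + (\<Sum>i=1..m. (P i - P (i+1)) * w (i+1))
    - (\<Sum>i=1..Suc m. P i * v i)"
  by (induction m) (simp_all add: algebra_simps)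

lemma lp_diff:
  fixes P a w v c d :: "nat \<Rightarrow> real"
  assumes n: "n \<ge> 1" and fe: "\<forall>j\<in>{1..n}. w (j+1) - w j - v j = a j" and w1: "w 1 = 0"
  shows "lp_obj n c d C w v - (\<Sum>i=1..n. P i * a i) =
    (\<Sum>i=1..n. (d i + P i) * v i) + (C - P n) * w (n+1) +
    (\<Sum>i=1..n-1. (c (i+1) - P i + P (i+1)) * w (i+1))"
proof -
  obtain m where m: "n = Suc m" using n by (cases n) auto
  have "(\<Sum>i=1..n. P i * a i) = (\<Sum>i=1..n. P i * (w (i+1) - w i - v i))"
    using fe by (intro sum.cong) auto
  also have "\<dots> = P n * w (n + 1) + (\<Sum>i=1..m. (P i - P (i+1)) * w (i+1))
    - (\<Sum>i=1..n. P i * v i)" unfolding m ident using w1 by simp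
  finally have A: "(\<Sum>i=1..n. P i * a i) = \<dots>" .
  have B0: "\<And>m. (\<Sum>i=1..Suc m. c i * w i) = c 1 * w 1 + (\<Sum>i=1..m. c (i+1) * w (i+1))"
    subgoal for m by (induction m) simp_all done
  have B: "(\<Sum>i=1..n. c i * w i) = (\<Sum>i=1..m. c (i+1) * w (i+1))"
    unfolding m B0 using w1 by simp
  show ?thesis unfolding lp_obj_def A sum.distrib
    using B m by (simp add: algebra_simps sum.distrib sum_subtractf)
qed

lemma sum_ind:
  fixes f :: "nat \<Rightarrow> real"
  assumes "b \<le> N"
  shows "(\<Sum>x=a..b. f x) = (\<Sum>x\<le>N. of_bool (a \<le> x \<and> x \<le> b) * f x)"
proof -
  have "(\<Sum>x\<le>N. of_bool (a \<le> x \<and> x \<le> b) * f x) = (\<Sum>x\<le>N. if x \<in> {a..b} then f x else 0)"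
    by (intro sum.cong) auto
  also have "\<dots> = sum f ({..N} \<inter> {a..b})" by (rule sym, rule sum.inter_restrict) simp
  also have "{..N} \<inter> {a..b} = {a..b}" using assms by auto
  finally show ?thesis by simp
qed

lemma swap3:
  fixes g :: "nat \<Rightarrow> nat \<Rightarrow> nat \<Rightarrow> real"
  shows "(\<Sum>k=1..n. \<Sum>l=k..n+1. \<Sum>i=k..min l n. g k l i) =
         (\<Sum>i=1..n. \<Sum>k=1..i. \<Sum>l=i..n+1. g k l i)"
proof -
  let ?N = "n+1"
  let ?F = "\<lambda>k l i. of_bool (1 \<le> k \<and> k \<le> n) * (of_bool (k \<le> l \<and> l \<le> n+1) * (of_bool (k \<le> i \<and> i \<le> min l n) * g k l i))"
  let ?G = "\<lambda>k l i. of_bool (1 \<le> i \<and> i \<le> n) * (of_bool (1 \<le> k \<and> k \<le> i) * (of_bool (i \<le> l \<and> l \<le> n+1) * g k l i))"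
  have e1: "\<And>k l. (\<Sum>i=k..min l n. g k l i) = (\<Sum>i\<le>?N. of_bool (k \<le> i \<and> i \<le> min l n) * g k l i)"
    by (rule sum_ind) simp
  have e2: "\<And>k (f::nat\<Rightarrow>real). (\<Sum>l=k..n+1. f l) = (\<Sum>l\<le>?N. of_bool (k \<le> l \<and> l \<le> n+1) * f l)"
    by (rule sum_ind) simp
  have e3: "\<And>(f::nat\<Rightarrow>real). (\<Sum>k=1..n. f k) = (\<Sum>k\<le>?N. of_bool (1 \<le> k \<and> k \<le> n) * f k)"
    by (rule sum_ind) simp
  have e4: "\<And>(f::nat\<Rightarrow>real). (\<Sum>k=1..i. f k) = (\<Sum>k\<le>?N. of_bool (1 \<le> k \<and> k \<le> i) * f k)"
    if "i \<le> n" for i by (rule sum_ind) (use that in simp)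
  have L: "(\<Sum>k=1..n. \<Sum>l=k..n+1. \<Sum>i=k..min l n. g k l i) = (\<Sum>k\<le>?N. \<Sum>l\<le>?N. \<Sum>i\<le>?N. ?F k l i)"
    by (simp only: e1 e2 e3 sum_distrib_left)
  have R0: "(\<Sum>i=1..n. \<Sum>k=1..i. \<Sum>l=i..n+1. g k l i) = (\<Sum>i=1..n. \<Sum>k\<le>?N. \<Sum>l\<le>?N. of_bool (1 \<le> k \<and> k \<le> i) * (of_bool (i \<le> l \<and> l \<le> n+1) * g k l i))"
  proof (rule sum.cong[OF refl])
    fix i assume "i \<in> {1..n}" then have i: "i \<le> n" by simp
    show "(\<Sum>k=1..i. \<Sum>l=i..n+1. g k l i) = (\<Sum>k\<le>?N. \<Sum>l\<le>?N. of_bool (1 \<le> k \<and> k \<le> i) * (of_bool (i \<le> l \<and> l \<le> n+1) * g k l i))"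
      by (simp only: e4[OF i] e2 sum_distrib_left)
  qed
  have R: "(\<Sum>i=1..n. \<Sum>k=1..i. \<Sum>l=i..n+1. g k l i) = (\<Sum>i\<le>?N. \<Sum>k\<le>?N. \<Sum>l\<le>?N. ?G k l i)"
    unfolding R0 by (simp only: e3 sum_distrib_left)
  have "(\<Sum>k\<le>?N. \<Sum>l\<le>?N. \<Sum>i\<le>?N. ?F k l i) = (\<Sum>k\<le>?N. \<Sum>i\<le>?N. \<Sum>l\<le>?N. ?F k l i)"
    by (intro sum.cong refl sum.swap)
  also have "\<dots> = (\<Sum>i\<le>?N. \<Sum>k\<le>?N. \<Sum>l\<le>?N. ?F k l i)" by (rule sum.swap)
  also have "\<dots> = (\<Sum>i\<le>?N. \<Sum>k\<le>?N. \<Sum>l\<le>?N. ?G k l i)"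
    by (intro sum.cong refl) (auto simp: of_bool_def)
  finally show ?thesis using L R by simp
qed

definition cons_lab :: "nat \<Rightarrow> (nat \<Rightarrow> nat) \<Rightarrow> bool" where
  "cons_lab n L \<longleftrightarrow> (\<forall>i\<in>{1..n}. i \<le> L i \<and> L i \<le> n+1) \<and>
     (\<forall>i\<in>{1..n-1}. L i \<noteq> i \<longrightarrow> L (i+1) = L i)"

definition tL :: "nat \<Rightarrow> (nat \<Rightarrow> nat) \<Rightarrow> nat \<Rightarrow> nat \<Rightarrow> real" where
  "tL n L k l = (if 1 \<le> k \<and> k \<le> n \<and> (k = 1 \<or> L (k-1) = k-1) \<and> l = L k then 1 else 0)"

lemma prop_const:
  assumes "cons_lab n L" "1 \<le> k"
  shows "k \<le> j \<Longrightarrow> j \<le> n \<Longrightarrow> j \<le> L k \<Longrightarrow> L j = L k"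
proof (induction j)
  case 0 then show ?case using assms by simp
next
  case (Suc j)
  show ?case
  proof (cases "k = Suc j")
    case True then show ?thesis by simp
  next
    case False
    then have kj: "k \<le> j" using Suc.prems by simp
    then have IH: "L j = L k" using Suc by simp
    then have "L j \<noteq> j" using Suc.prems by simp
    moreover have "j \<in> {1..n-1}" using kj assms Suc.prems by auto
    ultimately have "L (j+1) = L j" using assms(1) unfolding cons_lab_def by blast
    then show ?thesis using IH by simp
  qed
qed

lemma block_sum:
  fixes h :: "nat \<Rightarrow> real"
  assumes cl: "cons_lab n L" and i: "i \<in> {1..n}"
  shows "(\<Sum>k=1..i. \<Sum>l=i..n+1. tL n L k l * h l) = h (L i)"
proof -
  define st where "st k \<longleftrightarrow> (k = 1 \<or> L (k-1) = k-1)" for k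
  define K where "K = {k\<in>{1..i}. st k}"
  define k0 where "k0 = Max K"
  have fK: "finite K" and K1: "1 \<in> K" using i by (auto simp: K_def st_def)
  have k0K: "k0 \<in> K" unfolding k0_def using fK K1 Max_in by blast
  have k0max: "\<And>k. k \<in> K \<Longrightarrow> k \<le> k0" unfolding k0_def using fK by simp
  have k0i: "1 \<le> k0" "k0 \<le> i" "st k0" using k0K by (auto simp: K_def)
  have Lk0: "k0 \<le> j \<longrightarrow> j \<le> i \<longrightarrow> L j = L k0" for j
  proof (induction j)
    case 0 then show ?case using k0i by simp
  next
    case (Suc j)
    show ?case
    proof (intro impI)
      assume a: "k0 \<le> Suc j" "Suc j \<le> i"
      show "L (Suc j) = L k0"
      proof (cases "k0 = Suc j")
        case True then show ?thesis by simp
      next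
        case False
        then have kj: "k0 \<le> j" using a by simp
        then have IH: "L j = L k0" using Suc a by simp
        have "Suc j \<notin> K" using k0max kj by fastforce
        then have "\<not> st (Suc j)" using a by (auto simp: K_def)
        then have "L j \<noteq> j" by (simp add: st_def)
        moreover have "j \<in> {1..n-1}" using kj k0i a i by auto
        ultimately have "L (j+1) = L j" using cl unfolding cons_lab_def by blast
        then show ?thesis using IH by simp
      qed
    qed
  qed
  have Li: "L i = L k0" using Lk0[of i] k0i by blast
  have iLi: "i \<le> L i" "L i \<le> n+1" using cl i unfolding cons_lab_def by auto
  have uniq: "k = k0" if k: "k \<in> {1..i}" "st k" "i \<le> L k" for k
  proof (rule ccontr)
    assume ne: "k \<noteq> k0"
    have "k \<in> K" using k by (simp add: K_def)
    then have "k < k0" using k0max ne by fastforce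
    then have "L (k0-1) = L k" using prop_const[OF cl, of k "k0-1"] k i k0i by auto
    moreover have "L (k0-1) = k0-1" using k0i \<open>k < k0\<close> k by (auto simp: st_def)
    ultimately show False using k k0i \<open>k < k0\<close> by auto
  qed
  have inner: "(\<Sum>l=i..n+1. tL n L k l * h l) = (if k = k0 then h (L i) else 0)"
    if k: "k \<in> {1..i}" for k
  proof (cases "st k \<and> i \<le> L k")
    case True
    then have "k = k0" using uniq k by blast
    have "(\<Sum>l=i..n+1. tL n L k l * h l) = (\<Sum>l=i..n+1. if l = L k then h l else 0)"
      using True k i by (intro sum.cong) (auto simp: tL_def st_def)
    also have "\<dots> = h (L k)" using True iLi Li \<open>k = k0\<close> by (simp add: sum.delta')
    finally show ?thesis using \<open>k = k0\<close> Li by simp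
  next
    case False
    have "(\<Sum>l=i..n+1. tL n L k l * h l) = 0"
      using False by (intro sum.neutral) (auto simp: tL_def st_def)
    moreover have "k \<noteq> k0" using False k0i Li iLi by auto
    ultimately show ?thesis by simp
  qed
  have "(\<Sum>k=1..i. \<Sum>l=i..n+1. tL n L k l * h l) = (\<Sum>k=1..i. if k = k0 then h (L i) else 0)"
    using inner by (intro sum.cong) auto
  also have "\<dots> = h (L i)" using k0i by (simp add: sum.delta')
  finally show ?thesis .
qed


context
  fixes n :: nat and c d :: "nat \<Rightarrow> real" and C :: real
  assumes n: "n \<ge> 1"
    and c_nonneg: "\<forall>i\<in>{1..n}. c i \<ge> 0" and d_nonneg: "\<forall>i\<in>{1..n}. d i \<ge> 0"
    and C: "C \<ge> 0"
    and cd: "\<forall>i\<in>{1..n-1}. d (i+1) - d i \<le> c (i+1)"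
begin

lemma dcd:
  assumes "1 \<le> i"
  shows "i \<le> l \<Longrightarrow> l \<le> n \<Longrightarrow> d l - d i \<le> (\<Sum>q=i+1..l. c q)"
proof (induction l)
  case 0 then show ?case using assms by simp
next
  case (Suc l)
  show ?case
  proof (cases "i = Suc l")
    case True then show ?thesis by simp
  next
    case False
    then have il: "i \<le> l" using Suc.prems by simp
    then have IH: "d l - d i \<le> (\<Sum>q=i+1..l. c q)" using Suc by simp
    have "l \<in> {1..n-1}" using il assms Suc.prems by auto
    then have "d (l+1) - d l \<le> c (l+1)" using cd by blast
    moreover have "(\<Sum>q=i+1..Suc l. c q) = (\<Sum>q=i+1..l. c q) + c (Suc l)"
      using il by (simp add: sum.cl_ivl_Suc)
    ultimately show ?thesis using IH by simp
  qed
qed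

lemma pi_lower:
  assumes "i \<in> {1..n}" "i \<le> l" "l \<le> n+1"
  shows "- d i \<le> pi_coef n c d C i l"
proof (cases "l \<le> n")
  case True
  then show ?thesis using dcd[of i l] assms by (simp add: pi_coef_def)
next
  case False
  have "0 \<le> (\<Sum>q=i+1..n. c q)" using c_nonneg assms by (intro sum_nonneg) auto
  moreover have "0 \<le> d i" using d_nonneg assms by auto
  ultimately show ?thesis using False C by (auto simp: pi_coef_def)
qed

lemma pi_step:
  assumes "1 \<le> i" "i+1 \<le> l" "l \<le> n+1" "i+1 \<le> n"
  shows "pi_coef n c d C i l - pi_coef n c d C (i+1) l = c (i+1)"
proof (cases "l \<le> n")
  case True
  have "(\<Sum>q=i+1..l. c q) = c (i+1) + (\<Sum>q=i+2..l. c q)"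
    using assms by (simp add: sum.atLeast_Suc_atMost)
  then show ?thesis using True by (simp add: pi_coef_def)
next
  case False
  have "(\<Sum>q=i+1..n. c q) = c (i+1) + (\<Sum>q=i+2..n. c q)"
    using assms by (simp add: sum.atLeast_Suc_atMost)
  then show ?thesis using False by (simp add: pi_coef_def)
qed

lemma pi_diag: "i \<le> n \<Longrightarrow> pi_coef n c d C i i = - d i"
  by (simp add: pi_coef_def)

lemma pi_last: "pi_coef n c d C n (n+1) = C"
  by (simp add: pi_coef_def)

lemma DF1: "cons_lab n L \<Longrightarrow> i \<in> {1..n} \<Longrightarrow> - d i \<le> pi_coef n c d C i (L i)"
  by (rule pi_lower) (auto simp: cons_lab_def)

lemma DF2:
  assumes cl: "cons_lab n L" and i: "i \<in> {1..n-1}"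
  shows "pi_coef n c d C i (L i) - pi_coef n c d C (i+1) (L (i+1)) \<le> c (i+1)"
proof (cases "L i = i")
  case True
  have "- d (i+1) \<le> pi_coef n c d C (i+1) (L (i+1))" using DF1[OF cl, of "i+1"] i by auto
  moreover have "d (i+1) - d i \<le> c (i+1)" using cd i by blast
  ultimately show ?thesis using True pi_diag[of i] i by auto
next
  case False
  then have e: "L (i+1) = L i" using cl i unfolding cons_lab_def by blast
  have "i \<le> L i" "L i \<le> n+1" using cl i unfolding cons_lab_def by auto
  then show ?thesis using pi_step[of i "L i"] e False i by auto
qed

lemma DF3:
  assumes cl: "cons_lab n L"
  shows "pi_coef n c d C n (L n) \<le> C"
proof -
  have "n \<le> L n" "L n \<le> n+1" using cl n unfolding cons_lab_def by auto
  then have "L n = n \<or> L n = n+1" by auto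
  moreover have "0 \<le> d n" using d_nonneg n by auto
  ultimately show ?thesis using pi_diag[of n] pi_last C by auto
qed

lemma feas_conv:
  assumes "lp_feasible n s u w v"
  shows "\<forall>j\<in>{1..n}. w (j+1) - w j - v j = u j - s j" "w 1 = 0"
    "\<forall>i\<in>{1..n+1}. w i \<ge> 0" "\<forall>i\<in>{1..n}. v i \<ge> 0"
proof -
  show "\<forall>j\<in>{1..n}. w (j+1) - w j - v j = u j - s j"
  proof
    fix j assume j: "j \<in> {1..n}"
    then have "j+1 \<in> {2..n+1}" by auto
    then show "w (j+1) - w j - v j = u j - s j" using assms unfolding lp_feasible_def by fastforce
  qed
qed (use assms in \<open>auto simp: lp_feasible_def\<close>)

lemma weak:
  assumes cl: "cons_lab n L" and fe: "lp_feasible n s u w v"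
  shows "(\<Sum>i=1..n. pi_coef n c d C i (L i) * (u i - s i)) \<le> lp_obj n c d C w v"
proof -
  let ?P = "\<lambda>i. pi_coef n c d C i (L i)"
  note fc = feas_conv[OF fe]
  have D: "lp_obj n c d C w v - (\<Sum>i=1..n. ?P i * (u i - s i)) =
    (\<Sum>i=1..n. (d i + ?P i) * v i) + (C - ?P n) * w (n+1) +
    (\<Sum>i=1..n-1. (c (i+1) - ?P i + ?P (i+1)) * w (i+1))"
    by (rule lp_diff[OF n fc(1) fc(2)])
  have "0 \<le> (\<Sum>i=1..n. (d i + ?P i) * v i)"
    using DF1[OF cl] fc(4) by (intro sum_nonneg) fastforce
  moreover have "0 \<le> (C - ?P n) * w (n+1)" using DF3[OF cl] fc(3) by simp
  moreover have "0 \<le> (\<Sum>i=1..n-1. (c (i+1) - ?P i + ?P (i+1)) * w (i+1))"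
  proof (intro sum_nonneg)
    fix i assume i: "i \<in> {1..n-1}"
    then have "0 \<le> w (i+1)" using fc(3) by auto
    moreover have "0 \<le> c (i+1) - ?P i + ?P (i+1)" using DF2[OF cl i] by simp
    ultimately show "0 \<le> (c (i+1) - ?P i + ?P (i+1)) * w (i+1)" by simp
  qed
  ultimately show ?thesis using D by linarith
qed

lemma greedy:
  fixes s u :: "nat \<Rightarrow> real"
  shows "\<exists>L w v. cons_lab n L \<and> lp_feasible n s u w v \<and>
     lp_obj n c d C w v = (\<Sum>i=1..n. pi_coef n c d C i (L i) * (u i - s i))"
proof -
  define a where "a i = (if i = 0 then 0 else u i - s i)" for i
  define gw where "gw j = rec_nat (0::real) (\<lambda>i x. max 0 (x + a i)) j" for j
  have gw0: "gw 0 = 0" and gwS: "\<And>i. gw (Suc i) = max 0 (gw i + a i)" by (simp_all add: gw_def)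
  define gv where "gv i = max 0 (- (gw i + a i))" for i
  define Q where "Q i j \<longleftrightarrow> i \<le> j \<and> j \<le> n \<and> gw (j+1) = 0" for i j
  define Lg where "Lg i = (if \<exists>j. Q i j then (LEAST j. Q i j) else n+1)" for i
  have gw1: "gw 1 = 0" using gw0 gwS[of 0] by (simp add: a_def)
  have gwnn: "gw i \<ge> 0" for i by (cases i) (simp_all add: gw0 gwS)
  have fe: "lp_feasible n s u gw gv"
    unfolding lp_feasible_def
  proof (intro conjI ballI)
    fix i assume "i \<in> {2..n+1}"
    then obtain j where j: "i = Suc j" "j \<ge> 1" by (cases i) auto
    show "gw i - gv (i-1) = u (i-1) + gw (i-1) - s (i-1)"
      using j by (simp add: gwS gv_def a_def)
  qed (use gw1 gwnn in \<open>auto simp: gv_def\<close>)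
  have Lg_range: "i \<le> Lg i \<and> Lg i \<le> n+1" if "i \<le> n" for i
  proof (cases "\<exists>j. Q i j")
    case True
    define m where "m = (LEAST j. Q i j)"
    have "Q i m" unfolding m_def using True by (rule LeastI_ex)
    then have "i \<le> m \<and> m \<le> n" by (simp add: Q_def)
    moreover have "Lg i = m" using True by (simp add: Lg_def m_def)
    ultimately show ?thesis by simp
  qed (use that in \<open>auto simp: Lg_def\<close>)
  have Lg_self: "Lg i = i \<longleftrightarrow> (i \<le> n \<and> gw (i+1) = 0)" if iN: "i \<le> n" for i
  proof
    assume h: "Lg i = i"
    show "i \<le> n \<and> gw (i+1) = 0"
    proof (cases "\<exists>j. Q i j")
      case True
      define m where "m = (LEAST j. Q i j)"
      have "Q i m" unfolding m_def using True by (rule LeastI_ex)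
      then have "m \<le> n \<and> gw (m+1) = 0" by (simp add: Q_def)
      moreover have "Lg i = m" using True by (simp add: Lg_def m_def)
      ultimately show ?thesis using h by simp
    next
      case False then show ?thesis using h iN by (simp add: Lg_def)
    qed
  next
    assume h: "i \<le> n \<and> gw (i+1) = 0"
    then have "Q i i" by (simp add: Q_def)
    moreover have "(LEAST j. Q i j) = i"
      by (rule Least_equality) (use h in \<open>auto simp: Q_def\<close>)
    ultimately show "Lg i = i" by (auto simp: Lg_def)
  qed
  have Lg_next: "Lg (i+1) = Lg i" if "gw (i+1) \<noteq> 0" for i
  proof -
    have "Q (i+1) j \<longleftrightarrow> Q i j" for j
      using that by (cases "j = i") (auto simp: Q_def)
    then have "Q (i+1) = Q i" by blast
    then show ?thesis by (simp add: Lg_def)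
  qed
  have cl: "cons_lab n Lg"
    unfolding cons_lab_def
  proof (intro conjI ballI impI)
    fix i assume "i \<in> {1..n-1}" "Lg i \<noteq> i"
    moreover have "i \<le> n" using \<open>i \<in> {1..n-1}\<close> by (meson atLeastAtMost_iff diff_le_self le_trans)
    ultimately have "gw (i+1) \<noteq> 0" using Lg_self[of i] by blast
    then show "Lg (i+1) = Lg i" by (rule Lg_next)
  qed (use Lg_range in auto)
  let ?P = "\<lambda>i. pi_coef n c d C i (Lg i)"
  note fc = feas_conv[OF fe]
  have D: "lp_obj n c d C gw gv - (\<Sum>i=1..n. ?P i * (u i - s i)) =
    (\<Sum>i=1..n. (d i + ?P i) * gv i) + (C - ?P n) * gw (n+1) +
    (\<Sum>i=1..n-1. (c (i+1) - ?P i + ?P (i+1)) * gw (i+1))"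
    by (rule lp_diff[OF n fc(1) fc(2)])
  have "(\<Sum>i=1..n. (d i + ?P i) * gv i) = 0"
  proof (intro sum.neutral ballI)
    fix i assume i: "i \<in> {1..n}"
    show "(d i + ?P i) * gv i = 0"
    proof (cases "gv i = 0")
      case False
      then have "gw i + a i < 0" by (simp add: gv_def)
      then have "gw (i+1) = 0" by (simp add: gwS)
      then have "Lg i = i" using Lg_self i by auto
      then show ?thesis using pi_diag[of i] i by simp
    qed simp
  qed
  moreover have "(C - ?P n) * gw (n+1) = 0"
  proof (cases "gw (n+1) = 0")
    case False
    then have "\<not> (\<exists>j. Q n j)" by (auto simp: Q_def)
    then have "Lg n = n+1" by (simp add: Lg_def)
    then show ?thesis using pi_last by simp
  qed simp
  moreover have "(\<Sum>i=1..n-1. (c (i+1) - ?P i + ?P (i+1)) * gw (i+1)) = 0"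
  proof (intro sum.neutral ballI)
    fix i assume i: "i \<in> {1..n-1}"
    show "(c (i+1) - ?P i + ?P (i+1)) * gw (i+1) = 0"
    proof (cases "gw (i+1) = 0")
      case False
      then have e: "Lg (i+1) = Lg i" by (rule Lg_next)
      have r: "i \<le> Lg i \<and> Lg i \<le> n+1" using Lg_range i by auto
      have "i \<le> n" using i by (meson atLeastAtMost_iff diff_le_self le_trans)
      then have "Lg i \<noteq> i" using False Lg_self[of i] by blast
      then have "i+1 \<le> Lg i" using r by auto
      then have "?P i - ?P (i+1) = c (i+1)" using pi_step[of i "Lg i"] e i r by auto
      then show ?thesis by simp
    qed simp
  qed
  ultimately have "lp_obj n c d C gw gv = (\<Sum>i=1..n. ?P i * (u i - s i))" using D by linarith
  then show ?thesis using cl fe by blast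
qed

lemma fval:
  fixes s u :: "nat \<Rightarrow> real"
  shows "\<exists>L. cons_lab n L \<and> f_val n c d C s u = (\<Sum>i=1..n. pi_coef n c d C i (L i) * (u i - s i))"
    and "cons_lab n L \<Longrightarrow> (\<Sum>i=1..n. pi_coef n c d C i (L i) * (u i - s i)) \<le> f_val n c d C s u"
proof -
  obtain L0 w0 v0 where g: "cons_lab n L0" "lp_feasible n s u w0 v0"
    "lp_obj n c d C w0 v0 = (\<Sum>i=1..n. pi_coef n c d C i (L0 i) * (u i - s i))"
    using greedy by blast
  have "f_val n c d C s u = lp_obj n c d C w0 v0"
    unfolding f_val_def
  proof (rule cInf_eq_minimum)
    show "lp_obj n c d C w0 v0 \<in> {lp_obj n c d C w v |w v. lp_feasible n s u w v}" using g by blast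
  next
    fix x assume "x \<in> {lp_obj n c d C w v |w v. lp_feasible n s u w v}"
    then obtain w v where "x = lp_obj n c d C w v" "lp_feasible n s u w v" by blast
    then show "lp_obj n c d C w0 v0 \<le> x" using weak[OF g(1)] g(3) by simp
  qed
  then show "\<exists>L. cons_lab n L \<and> f_val n c d C s u = (\<Sum>i=1..n. pi_coef n c d C i (L i) * (u i - s i))"
    using g by auto
  show "cons_lab n L \<Longrightarrow> (\<Sum>i=1..n. pi_coef n c d C i (L i) * (u i - s i)) \<le> f_val n c d C s u"
    using weak[OF _ g(2)] \<open>f_val n c d C s u = _\<close> by simp
qed

end


lemma zmax:
  fixes a b h pc \<rho> p :: real
  assumes ab: "a \<le> b" and p: "p > 0"
  shows "\<exists>x. a \<le> x \<and> x \<le> b \<and>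
    Sup {pc * y - \<rho> * \<bar>y - h\<bar> powr p | y. a \<le> y \<and> y \<le> b} = pc * x - \<rho> * \<bar>x - h\<bar> powr p \<and>
    (\<forall>y. a \<le> y \<and> y \<le> b \<longrightarrow> pc * y - \<rho> * \<bar>y - h\<bar> powr p \<le> pc * x - \<rho> * \<bar>x - h\<bar> powr p)"
proof -
  let ?g = "\<lambda>y. pc * y - \<rho> * \<bar>y - h\<bar> powr p"
  have c1: "continuous_on {a..b} (\<lambda>y. \<bar>y - h\<bar> powr p)"
    by (rule continuous_on_powr') (auto intro!: continuous_intros simp: p)
  have "continuous_on {a..b} ?g"
    by (intro continuous_intros c1)
  then obtain x where x: "x \<in> {a..b}" "\<forall>y\<in>{a..b}. ?g y \<le> ?g x"
    using continuous_attains_sup[of "{a..b}" ?g] ab by auto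
  have "Sup {?g y | y. a \<le> y \<and> y \<le> b} = ?g x"
  proof (rule cSup_eq_maximum)
    show "?g x \<in> {?g y | y. a \<le> y \<and> y \<le> b}" using x by auto
  next
    fix z assume "z \<in> {?g y | y. a \<le> y \<and> y \<le> b}"
    then show "z \<le> ?g x" using x by auto
  qed
  then show ?thesis using x by auto
qed

lemma zfacts:
  assumes "uL i \<le> uU i" "p > 0"
  shows "\<exists>x. uL i \<le> x \<and> x \<le> uU i \<and>
    z_coef n c d C uL uU uhat p \<rho> s i l = - s i * pi_coef n c d C i l +
       (pi_coef n c d C i l * x - \<rho> * \<bar>x - uhat i\<bar> powr p) \<and>
    (\<forall>y. uL i \<le> y \<and> y \<le> uU i \<longrightarrow> pi_coef n c d C i l * y - \<rho> * \<bar>y - uhat i\<bar> powr p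
        \<le> pi_coef n c d C i l * x - \<rho> * \<bar>x - uhat i\<bar> powr p)"
  using zmax[OF assms, of "pi_coef n c d C i l" \<rho> "uhat i"] unfolding z_coef_def by auto


theorem proposition2:
  fixes n :: nat and T C p \<rho> :: real
    and c d s uL uU uhat :: "nat \<Rightarrow> real"
  assumes n: "n \<ge> 1" and T: "T > 0"
    and s_nonneg: "\<forall>i\<in>{1..n}. s i \<ge> 0" and s_sum: "(\<Sum>i=1..n. s i) \<le> T"
    and c_nonneg: "\<forall>i\<in>{1..n}. c i \<ge> 0" and d_nonneg: "\<forall>i\<in>{1..n}. d i \<ge> 0"
    and C: "C \<ge> 0"
    and cd: "\<forall>i\<in>{1..n-1}. d (i+1) - d i \<le> c (i+1)"
    and box: "\<forall>i\<in>{1..n}. 0 \<le> uL i \<and> uL i < uU i"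
    and uhat: "\<forall>i\<in>{1..n}. uL i \<le> uhat i \<and> uhat i \<le> uU i"
    and p: "p \<ge> 1" and rho: "\<rho> \<ge> 0"
  shows "\<exists>t. t_feasible n t \<and>
           t_obj n (z_coef n c d C uL uU uhat p \<rho> s) t = omega n c d C uL uU uhat p \<rho> s \<and>
           (\<forall>t'. t_feasible n t' \<longrightarrow>
              t_obj n (z_coef n c d C uL uU uhat p \<rho> s) t' \<le> omega n c d C uL uU uhat p \<rho> s)"
proof -
  define z where "z = z_coef n c d C uL uU uhat p \<rho> s"
  define pc where "pc = pi_coef n c d C"
  define V where "V k L = (\<Sum>i=k..n. z i (L i))" for k and L :: "nat \<Rightarrow> nat"
  define VS where "VS k = {V k L | L. cons_lab n L}" for k
  define \<phi> where "\<phi> k = Max (VS k)" for k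
  note hyps = n c_nonneg d_nonneg C cd
  have p0: "p > 0" using p by simp
  have cl_id: "cons_lab n (\<lambda>i. i)" by (simp add: cons_lab_def)
  have VS_ne: "VS k \<noteq> {}" for k using cl_id by (auto simp: VS_def)
  have VS_fin: "finite (VS k)" if k: "k \<ge> 1" for k
  proof -
    have "VS k \<subseteq> (\<lambda>L. V k L) ` (PiE {1..n} (\<lambda>_. {0..n+1}))"
    proof
      fix x assume "x \<in> VS k"
      then obtain L where L: "x = V k L" "cons_lab n L" by (auto simp: VS_def)
      have r1: "restrict L {1..n} \<in> PiE {1..n} (\<lambda>_. {0..n+1})"
        using L(2) by (auto simp: cons_lab_def)
      have r2: "x = V k (restrict L {1..n})"
        unfolding V_def L(1) using k by (intro sum.cong) auto
      show "x \<in> (\<lambda>L. V k L) ` (PiE {1..n} (\<lambda>_. {0..n+1}))"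
        unfolding r2 by (rule imageI[OF r1])
    qed
    moreover have "finite (PiE {1..n} (\<lambda>_::nat. {0..n+1}))" by (intro finite_PiE) auto
    ultimately show ?thesis using finite_subset by blast
  qed
  have phi_ge: "V k L \<le> \<phi> k" if "k \<ge> 1" "cons_lab n L" for k L
    unfolding \<phi>_def using VS_fin[OF that(1)] that(2) by (intro Max_ge) (auto simp: VS_def)
  have phi_ex: "\<exists>L. cons_lab n L \<and> \<phi> k = V k L" if "k \<ge> 1" for k
  proof -
    have "\<phi> k \<in> VS k" unfolding \<phi>_def using VS_fin[OF that] VS_ne by (rule Max_in)
    then show ?thesis by (auto simp: VS_def)
  qed
  have phi_big: "\<phi> k = 0" if "k > n" for k
  proof -
    have "VS k = {0}" using that cl_id by (auto simp: VS_def V_def)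
    then show ?thesis by (simp add: \<phi>_def)
  qed
  have F3: "(\<Sum>i=k..min l n. z i l) + \<phi> (l+1) \<le> \<phi> k" if kl: "k \<in> {1..n}" "k \<le> l" "l \<le> n+1" for k l
  proof -
    obtain L0 where L0: "cons_lab n L0" "\<phi> (l+1) = V (l+1) L0" using phi_ex[of "l+1"] by auto
    define L' where "L' j = (if j < k then j else if j \<le> l then l else L0 j)" for j
    have cl': "cons_lab n L'"
      unfolding cons_lab_def
    proof (intro conjI ballI impI)
      fix j assume j: "j \<in> {1..n}"
      show "j \<le> L' j" using j kl L0(1) unfolding L'_def cons_lab_def by auto
    next
      fix j assume j: "j \<in> {1..n}"
      show "L' j \<le> n+1" using j kl L0(1) unfolding L'_def cons_lab_def by auto
    next
      fix j assume j: "j \<in> {1..n-1}" and ne: "L' j \<noteq> j"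
      show "L' (j+1) = L' j"
      proof (cases "j < k")
        case True then show ?thesis using ne by (simp add: L'_def)
      next
        case False
        show ?thesis
        proof (cases "j \<le> l")
          case True
          then have "j < l" using ne False by (auto simp: L'_def)
          then show ?thesis using False True by (simp add: L'_def)
        next
          case jl: False
          have "L0 j \<noteq> j" using ne False jl by (simp add: L'_def)
          then have "L0 (j+1) = L0 j" using L0(1) j unfolding cons_lab_def by blast
          then show ?thesis using False jl by (simp add: L'_def)
        qed
      qed
    qed
    have "V k L' = (\<Sum>i=k..min l n. z i l) + V (l+1) L0"
    proof (cases "l < n")
      case True
      have "{k..n} = {k..l} \<union> {l+1..n}" using kl True by auto
      then have "V k L' = (\<Sum>i\<in>{k..l}. z i (L' i)) + (\<Sum>i\<in>{l+1..n}. z i (L' i))"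
        unfolding V_def by (simp add: sum.union_disjoint)
      also have "(\<Sum>i\<in>{k..l}. z i (L' i)) = (\<Sum>i=k..min l n. z i l)"
        using True by (intro sum.cong) (auto simp: L'_def)
      also have "(\<Sum>i\<in>{l+1..n}. z i (L' i)) = V (l+1) L0"
        unfolding V_def using kl by (intro sum.cong) (auto simp: L'_def)
      finally show ?thesis .
    next
      case False
      have "V (l+1) L0 = 0" using False by (simp add: V_def)
      moreover have "V k L' = (\<Sum>i=k..min l n. z i l)"
        unfolding V_def using False by (intro sum.cong) (auto simp: L'_def)
      ultimately show ?thesis by simp
    qed
    then show ?thesis using phi_ge[OF _ cl', of k] kl L0(2) by simp
  qed
  have F4: "t_obj n z t \<le> \<phi> 1" if tf: "t_feasible n t" for t
  proof -
    have tnn: "\<And>k l. k \<in> {1..n} \<Longrightarrow> l \<in> {k..n+1} \<Longrightarrow> t k l \<ge> 0"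
      and tsum: "\<And>i. i \<in> {1..n} \<Longrightarrow> (\<Sum>k=1..i. \<Sum>l=i..n+1. t k l) = 1"
      using tf unfolding t_feasible_def by auto
    have "t_obj n z t \<le> (\<Sum>k=1..n. \<Sum>l=k..n+1. (\<Sum>i=k..min l n. \<phi> i - \<phi> (i+1)) * t k l)"
      unfolding t_obj_def
    proof (intro sum_mono)
      fix k l assume k: "k \<in> {1..n}" and l: "l \<in> {k..n+1}"
      have e: "\<phi> (l+1) = \<phi> (min l n + 1)"
        using phi_big[of "l+1"] phi_big[of "min l n + 1"] by (cases "l \<le> n") auto
      have "(\<Sum>i=k..min l n. \<phi> i - \<phi> (i+1)) = \<phi> k - \<phi> (min l n + 1)"
      proof -
        have kk: "k \<le> Suc (min l n)" using k l by (simp add: min_def)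
        show ?thesis using sum_Suc_diff[OF kk, of "\<lambda>i. - \<phi> i"] by simp
      qed
      then have "(\<Sum>i=k..min l n. z i l) \<le> (\<Sum>i=k..min l n. \<phi> i - \<phi> (i+1))"
        using F3[of k l] k l e by auto
      then show "(\<Sum>i=k..min l n. z i l) * t k l \<le> (\<Sum>i=k..min l n. \<phi> i - \<phi> (i+1)) * t k l"
        using tnn[OF k l] by (rule mult_right_mono)
    qed
    also have "\<dots> = (\<Sum>k=1..n. \<Sum>l=k..n+1. \<Sum>i=k..min l n. (\<phi> i - \<phi> (i+1)) * t k l)"
      by (simp add: sum_distrib_right)
    also have "\<dots> = (\<Sum>i=1..n. \<Sum>k=1..i. \<Sum>l=i..n+1. (\<phi> i - \<phi> (i+1)) * t k l)"
      by (rule swap3)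
    also have "\<dots> = (\<Sum>i=1..n. (\<phi> i - \<phi> (i+1)) * (\<Sum>k=1..i. \<Sum>l=i..n+1. t k l))"
      by (simp only: sum_distrib_left)
    also have "\<dots> = (\<Sum>i=1..n. (\<phi> i - \<phi> (i+1)))"
      using tsum by (intro sum.cong) auto
    also have "\<dots> = \<phi> 1 - \<phi> (n+1)"
      using sum_Suc_diff[of 1 n "\<lambda>i. - \<phi> i"] by simp
    also have "\<dots> = \<phi> 1" using phi_big[of "n+1"] by simp
    finally show ?thesis .
  qed
  have F5: "t_feasible n (tL n L) \<and> t_obj n z (tL n L) = V 1 L" if cl: "cons_lab n L" for L
  proof
    show "t_feasible n (tL n L)"
      unfolding t_feasible_def
    proof (intro conjI ballI)
      fix i assume i: "i \<in> {1..n}"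
      show "(\<Sum>k=1..i. \<Sum>l=i..n+1. tL n L k l) = 1"
        using block_sum[OF cl i, of "\<lambda>_. 1"] by simp
    qed (auto simp: tL_def)
    have "t_obj n z (tL n L) = (\<Sum>k=1..n. \<Sum>l=k..n+1. \<Sum>i=k..min l n. z i l * tL n L k l)"
      unfolding t_obj_def by (simp only: sum_distrib_right)
    also have "\<dots> = (\<Sum>i=1..n. \<Sum>k=1..i. \<Sum>l=i..n+1. z i l * tL n L k l)"
      by (rule swap3)
    also have "\<dots> = (\<Sum>i=1..n. z i (L i))"
    proof (rule sum.cong[OF refl])
      fix i assume i: "i \<in> {1..n}"
      show "(\<Sum>k=1..i. \<Sum>l=i..n+1. z i l * tL n L k l) = z i (L i)"
        using block_sum[OF cl i, of "\<lambda>l. z i l"] by (simp add: mult.commute)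
    qed
    finally show "t_obj n z (tL n L) = V 1 L" by (simp add: V_def)
  qed
  define el where "el u = f_val n c d C s u - \<rho> * (\<Sum>i=1..n. \<bar>u i - uhat i\<bar> powr p)" for u
  have om: "omega n c d C uL uU uhat p \<rho> s = Sup {el u | u. \<forall>i\<in>{1..n}. uL i \<le> u i \<and> u i \<le> uU i}"
    by (simp add: omega_def el_def)
  have zf: "\<exists>x. uL i \<le> x \<and> x \<le> uU i \<and>
    z i l = - s i * pc i l + (pc i l * x - \<rho> * \<bar>x - uhat i\<bar> powr p) \<and>
    (\<forall>y. uL i \<le> y \<and> y \<le> uU i \<longrightarrow> pc i l * y - \<rho> * \<bar>y - uhat i\<bar> powr p
        \<le> pc i l * x - \<rho> * \<bar>x - uhat i\<bar> powr p)" if i: "i \<in> {1..n}" for i l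
  proof -
    have bi: "uL i \<le> uU i" using box i by (meson less_imp_le)
    show ?thesis unfolding z_def pc_def by (rule zfacts[where uL=uL and uU=uU and i=i, OF bi p0])
  qed
  have el_le: "el u \<le> \<phi> 1" if u: "\<forall>i\<in>{1..n}. uL i \<le> u i \<and> u i \<le> uU i" for u
  proof -
    obtain Lu where Lu: "cons_lab n Lu" "f_val n c d C s u = (\<Sum>i=1..n. pc i (Lu i) * (u i - s i))"
      using fval(1)[where s=s and u=u, OF hyps] unfolding pc_def by blast
    have "el u = (\<Sum>i=1..n. pc i (Lu i) * (u i - s i) - \<rho> * \<bar>u i - uhat i\<bar> powr p)"
      unfolding el_def Lu(2) by (simp add: sum_subtractf sum_distrib_left)
    also have "\<dots> \<le> (\<Sum>i=1..n. z i (Lu i))"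
    proof (intro sum_mono)
      fix i assume i: "i \<in> {1..n}"
      obtain x where x: "z i (Lu i) = - s i * pc i (Lu i) + (pc i (Lu i) * x - \<rho> * \<bar>x - uhat i\<bar> powr p)"
        "\<forall>y. uL i \<le> y \<and> y \<le> uU i \<longrightarrow> pc i (Lu i) * y - \<rho> * \<bar>y - uhat i\<bar> powr p
        \<le> pc i (Lu i) * x - \<rho> * \<bar>x - uhat i\<bar> powr p"
        using zf[OF i, of "Lu i"] by blast
      have "pc i (Lu i) * u i - \<rho> * \<bar>u i - uhat i\<bar> powr p \<le> pc i (Lu i) * x - \<rho> * \<bar>x - uhat i\<bar> powr p"
        using x(2) u i by blast
      then show "pc i (Lu i) * (u i - s i) - \<rho> * \<bar>u i - uhat i\<bar> powr p \<le> z i (Lu i)"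
        using x(1) by (simp add: algebra_simps)
    qed
    also have "\<dots> = V 1 Lu" by (simp add: V_def)
    also have "\<dots> \<le> \<phi> 1" using phi_ge[OF _ Lu(1)] by simp
    finally show ?thesis .
  qed
  obtain Ls where Ls: "cons_lab n Ls" "\<phi> 1 = V 1 Ls" using phi_ex[of 1] by auto
  have "\<forall>i\<in>{1..n}. \<exists>x. uL i \<le> x \<and> x \<le> uU i \<and>
      z i (Ls i) = - s i * pc i (Ls i) + (pc i (Ls i) * x - \<rho> * \<bar>x - uhat i\<bar> powr p)"
    using zf by blast
  then obtain us where us: "\<forall>i\<in>{1..n}. uL i \<le> us i \<and> us i \<le> uU i \<and>
      z i (Ls i) = - s i * pc i (Ls i) + (pc i (Ls i) * us i - \<rho> * \<bar>us i - uhat i\<bar> powr p)"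
    by metis
  have usbox: "\<forall>i\<in>{1..n}. uL i \<le> us i \<and> us i \<le> uU i" using us by blast
  have "\<phi> 1 = (\<Sum>i=1..n. z i (Ls i))" using Ls(2) by (simp add: V_def)
  also have "\<dots> = (\<Sum>i=1..n. pc i (Ls i) * (us i - s i) - \<rho> * \<bar>us i - uhat i\<bar> powr p)"
    using us by (intro sum.cong) (auto simp: algebra_simps)
  also have "\<dots> = (\<Sum>i=1..n. pc i (Ls i) * (us i - s i)) - \<rho> * (\<Sum>i=1..n. \<bar>us i - uhat i\<bar> powr p)"
    by (simp add: sum_subtractf sum_distrib_left)
  also have "\<dots> \<le> el us"
    unfolding el_def pc_def using fval(2)[where s=s and u=us, OF hyps Ls(1)] by simp
  finally have ge: "\<phi> 1 \<le> el us" .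
  have omega_eq: "omega n c d C uL uU uhat p \<rho> s = \<phi> 1"
    unfolding om
  proof (rule cSup_eq_maximum)
    show "\<phi> 1 \<in> {el u | u. \<forall>i\<in>{1..n}. uL i \<le> u i \<and> u i \<le> uU i}"
      using ge el_le[OF usbox] usbox by (intro CollectI exI[of _ us]) auto
  next
    fix x assume "x \<in> {el u | u. \<forall>i\<in>{1..n}. uL i \<le> u i \<and> u i \<le> uU i}"
    then show "x \<le> \<phi> 1" using el_le by auto
  qed
  show ?thesis
    unfolding z_def[symmetric] omega_eq
    using F5[OF Ls(1)] Ls(2) F4 by metis
qed

end
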